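(* Consider a network as described in the context with $\Delta_{ij}>0$ for all $i\ne j$, and let $r=1+\big\lfloor \max_i\theta_i/\min_{i\ne j}\Delta_{ij}\big\rfloor$. If at some spiking instant $t_n$ at least $r$ cells spike (i.e. $\#I(t_n)\ge r$), then all cells spike at $t_n$, i.e. $I(t_n)=\{1,\dots,m\}$.
   Context: Network model. Fix an integer $m\ge 2$ (the number of units, or cells). For each $i\in\{1,\dots,m\}$ the following data are given. - $X_i$ is a compact finite-dimensional smooth manifold. - $f_i$ is a continuous vector field on $X_i$. - $S_i:X_i\to\mathbb R$ is a $C^1$ function, called the satisfaction level. - $\theta_i>0$ is a constant, called the goal. These are required to satisfy: there is $v_i>0$ with $\nabla S_i(x)\cdot f_i(x)>v_i$ for every $x\in X_i$ with $S_i(x)<\theta_i$. Real interaction weights $\Delta_{ij}$ are given for $i\ne j$. The global state $\mathbf x(t)=(x_1(t),\dots,x_m(t))\in\prod_i X_i$, $t\ge 0$, evolves as follows. Spiking instants $0\le t_0<t_1<\cdots$ are the instants at which at least one cell spikes. Between consecutive spiking instants each $x_i$ evolves independently by $dx_i/dt=f_i(x_i)$. At an instant $t_n$, write $S_j(x_j(t_n^-))=\lim_{t\to t_n^-}S_j(x_j(t))$. The coalition is $I(t_n)=\bigcup_{p\ge 0}I_p(t_n)$, where: - $I_0(t_n)$ is the set of cells $i$ with $S_i(x_i(t_n^-))\ge\theta_i$; - for $p\ge1$, $I_p(t_n)$ is the set of cells $j\notin\bigcup_{k<p}I_k(t_n)$ with $S_j(x_j(t_n^-))+\sum_{k<p}\sum_{i\in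 I_k(t_n)}\Delta_{ij}\ge\theta_j$. The spiking instants are exactly the instants with $I_0(t_n)\neq\emptyset$, and the cells in $I(t_n)$ are said to spike at $t_n$. At $t_n$ the state jumps as follows: - for $j\in I(t_n)$, $x_j(t_n)$ is a point with $S_j(x_j(t_n))=0$; - for $j\notin I(t_n)$, $x_j(t_n)$ is a point with $S_j(x_j(t_n))=S_j(x_j(t_n^-))+\sum_{i\in I(t_n),\,i\ne j}\Delta_{ij}$. Initial states are assumed to satisfy $S_i(x_i(0))\in[0,\theta_i)$ for all $i$. The network is cooperative if $\Delta_{ij}\ge 0$ for all $i\ne j$. A cooperative network is large enough if $\sqrt m\ge 1+\frac{\max_i\theta_i}{\min_{i\ne j}\Delta_{ij}}$; in particular this requires $\Delta_{ij}>0$ for all $i\ne j$. The grand coalition is exhibited at $t_n$ if $I(t_n)=\{1,\dots,m\}$. *)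

theory Defs
  imports "HOL-Analysis.Analysis"
begin

text \<open>Cells are 1..m. s j is the pre-spike
satisfaction level S_j(x_j(t_n^-)), th j the goal, D i j the weight Delta_ij.
coal_layers m th D s p is a function whose value at k<=p is the layer I_k.\<close>

primrec coal_layers ::
  "nat \<Rightarrow> (nat \<Rightarrow> real) \<Rightarrow> (nat \<Rightarrow> nat \<Rightarrow> real) \<Rightarrow> (nat \<Rightarrow> real) \<Rightarrow> nat \<Rightarrow> (nat \<Rightarrow> nat set)" where
  "coal_layers m th D s 0 =
     (\<lambda>k. if k = 0 then {i \<in> {1..m}. th i \<le> s i} else {})"
| "coal_layers m th D s (Suc p) =
     (let L = coal_layers m th D s p in
      L(Suc p := {j \<in> {1..m}. j \<notin> (\<Union>k\<le>p. L k) \<and>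
                     th j \<le> s j + (\<Sum>k\<le>p. \<Sum>i\<in>L k. D i j)}))"

definition coal_layer ::
  "nat \<Rightarrow> (nat \<Rightarrow> real) \<Rightarrow> (nat \<Rightarrow> nat \<Rightarrow> real) \<Rightarrow> (nat \<Rightarrow> real) \<Rightarrow> nat \<Rightarrow> nat set" where
  "coal_layer m th D s p = coal_layers m th D s p p"

definition coalition ::
  "nat \<Rightarrow> (nat \<Rightarrow> real) \<Rightarrow> (nat \<Rightarrow> nat \<Rightarrow> real) \<Rightarrow> (nat \<Rightarrow> real) \<Rightarrow> nat set" where
  "coalition m th D s = (\<Union>p. coal_layer m th D s p)"

definition interval_start :: "(nat \<Rightarrow> real) \<Rightarrow> nat \<Rightarrow> real" where
  "interval_start tau k = (if k = 0 then 0 else tau (k - 1))"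

end

theory Submission imports Defs begin

lemma cl_empty: "p < k \<Longrightarrow> coal_layers m th D s p k = {}"
  by (induction p arbitrary: k) (auto simp: Let_def)

lemma cl_suc: "k \<le> p \<Longrightarrow> coal_layers m th D s (Suc p) k = coal_layers m th D s p k"
  by (simp add: Let_def)

lemma cl_stable: "k \<le> p \<Longrightarrow> coal_layers m th D s p k = coal_layer m th D s k"
proof (induction p rule: dec_induct)
  case base then show ?case by (simp add: coal_layer_def)
next
  case (step q)
  have "coal_layers m th D s (Suc q) k = coal_layers m th D s q k" by (rule cl_suc) (use step in simp)
  then show ?case using step.IH by simp
qed

lemma cl_sub: "coal_layers m th D s p k \<subseteq> {1..m}"
  by (induction p arbitrary: k) (auto simp: Let_def)

lemma layer_sub: "coal_layer m th D s k \<subseteq> {1..m}"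
  unfolding coal_layer_def by (rule cl_sub)

lemma layer_suc: "coal_layer m th D s (Suc p) = {j \<in> {1..m}. j \<notin> (\<Union>k\<le>p. coal_layer m th D s k) \<and>
                     th j \<le> s j + (\<Sum>k\<le>p. \<Sum>i\<in>coal_layer m th D s k. D i j)}"
proof -
  have "coal_layer m th D s (Suc p) = coal_layers m th D s (Suc p) (Suc p)" by (simp add: coal_layer_def)
  also have "\<dots> = {j \<in> {1..m}. j \<notin> (\<Union>k\<le>p. coal_layers m th D s p k) \<and>
                     th j \<le> s j + (\<Sum>k\<le>p. \<Sum>i\<in>coal_layers m th D s p k. D i j)}"
    by (simp add: Let_def)
  also have "\<dots> = {j \<in> {1..m}. j \<notin> (\<Union>k\<le>p. coal_layer m th D s k) \<and>
                     th j \<le> s j + (\<Sum>k\<le>p. \<Sum>i\<in>coal_layer m th D s k. D i j)}"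
  proof -
    have e: "(\<Sum>k\<le>p. \<Sum>i\<in>coal_layers m th D s p k. D i j) = (\<Sum>k\<le>p. \<Sum>i\<in>coal_layer m th D s k. D i j)" for j
      by (rule sum.cong) (simp_all add: cl_stable)
    have u: "(\<Union>k\<le>p. coal_layers m th D s p k) = (\<Union>k\<le>p. coal_layer m th D s k)"
      by (rule SUP_cong) (simp_all add: cl_stable)
    show ?thesis unfolding e u ..
  qed
  finally show ?thesis .
qed

lemma layer_disj: "k < l \<Longrightarrow> coal_layer m th D s k \<inter> coal_layer m th D s l = {}"
proof (cases l)
  case (Suc p)
  assume "k < l" then have "k \<le> p" using Suc by simp
  then show ?thesis unfolding Suc layer_suc by auto
qed simp

lemma coal_sub: "coalition m th D s \<subseteq> {1..m}"
  unfolding coalition_def by (intro UN_least layer_sub)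

lemma sum_layers: "(\<Sum>k\<le>p. \<Sum>i\<in>coal_layer m th D s k. D i j) = (\<Sum>i\<in>(\<Union>k\<le>p. coal_layer m th D s k). D i j)"
proof (rule sum.UNION_disjoint[symmetric])
  show "finite {..p}" by simp
  show "\<forall>k\<in>{..p}. finite (coal_layer m th D s k)" using layer_sub finite_subset by (metis finite_atLeastAtMost)
  show "\<forall>k\<in>{..p}. \<forall>l\<in>{..p}. k \<noteq> l \<longrightarrow> coal_layer m th D s k \<inter> coal_layer m th D s l = {}"
  proof (intro ballI impI)
    fix k l :: nat assume "k \<noteq> l"
    then show "coal_layer m th D s k \<inter> coal_layer m th D s l = {}"
      using layer_disj[of k l m th D s] layer_disj[of l k m th D s] by (cases "k < l") auto
  qed
qed

lemma coal_stab: "\<exists>p. (\<Union>k\<le>p. coal_layer m th D s k) = coalition m th D s"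
proof -
  let ?C = "coalition m th D s"
  have fin: "finite ?C" using coal_sub finite_subset by (metis finite_atLeastAtMost)
  have "\<forall>i\<in>?C. \<exists>p. i \<in> coal_layer m th D s p" by (auto simp: coalition_def)
  from bchoice[OF this] obtain f where f: "\<forall>i\<in>?C. i \<in> coal_layer m th D s (f i)" by blast
  define p where "p = Max (f ` ?C)"
  have "\<forall>i\<in>?C. f i \<le> p" using fin by (simp add: p_def)
  then have "?C \<subseteq> (\<Union>k\<le>p. coal_layer m th D s k)" using f by blast
  moreover have "(\<Union>k\<le>p. coal_layer m th D s k) \<subseteq> ?C" by (auto simp: coalition_def)
  ultimately show ?thesis by blast
qed

theorem mainTheorem5:
  fixes m n :: nat
    and th v :: "nat \<Rightarrow> real"
    and D :: "nat \<Rightarrow> nat \<Rightarrow> real"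
    and x :: "nat \<Rightarrow> real \<Rightarrow> 'a"
    and S :: "nat \<Rightarrow> 'a \<Rightarrow> real"
    and tau :: "nat \<Rightarrow> real"
    and Sm :: "nat \<Rightarrow> nat \<Rightarrow> real"
  assumes m2: "m \<ge> 2"
    and th_pos: "\<forall>i\<in>{1..m}. 0 < th i"
    and v_pos: "\<forall>i\<in>{1..m}. 0 < v i"
    and D_pos: "\<forall>i\<in>{1..m}. \<forall>j\<in>{1..m}. i \<noteq> j \<longrightarrow> 0 < D i j"
    and init: "\<forall>i\<in>{1..m}. 0 \<le> S i (x i 0) \<and> S i (x i 0) < th i"
    and tau_mono: "\<forall>k\<le>n. interval_start tau k < tau k"
    and flow: "\<forall>k\<le>n. \<forall>i\<in>{1..m}.
        continuous_on {interval_start tau k..<tau k} (\<lambda>t. S i (x i t)) \<and>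
        (\<forall>t\<in>{interval_start tau k<..<tau k}. S i (x i t) < th i \<and>
            (\<exists>d. ((\<lambda>t. S i (x i t)) has_real_derivative d) (at t) \<and> v i < d))"
    and leftlim: "\<forall>k\<le>n. \<forall>i\<in>{1..m}. ((\<lambda>t. S i (x i t)) \<longlongrightarrow> Sm i k) (at_left (tau k))"
    and spiking: "\<forall>k\<le>n. \<exists>i\<in>{1..m}. th i \<le> Sm i k"
    and jump: "\<forall>k\<le>n. \<forall>j\<in>{1..m}.
        S j (x j (tau k)) =
          (if j \<in> coalition m th D (\<lambda>i. Sm i k) then 0
           else Sm j k + (\<Sum>i\<in>coalition m th D (\<lambda>i. Sm i k) - {j}. D i j))"
    and big: "int (card (coalition m th D (\<lambda>i. Sm i n))) \<ge>
        1 + \<lfloor>Max (th ` {1..m}) / Min {D i j | i j. i \<in> {1..m} \<and> j \<in> {1..m} \<and> i \<noteq> j}\<rfloor>"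
  shows "coalition m th D (\<lambda>i. Sm i n) = {1..m}"
proof -
  have nonneg: "\<forall>j\<in>{1..m}. 0 \<le> Sm j k" if "k \<le> n" for k
    using that
  proof (induction k)
    case 0
    show ?case
    proof
      fix j assume j: "j \<in> {1..m}"
      let ?f = "\<lambda>t. S j (x j t)"
      let ?a = "interval_start tau 0" let ?b = "tau 0"
      have a0: "0 \<le> ?f ?a" using init j by (simp add: interval_start_def)
      show "0 \<le> Sm j 0"
      proof (rule tendsto_lowerbound)
        show "(?f \<longlongrightarrow> Sm j 0) (at_left ?b)" using leftlim j by simp
        show "at_left ?b \<noteq> bot" by simp
        have ab: "?a < ?b" using tau_mono by simp
        have "\<forall>t\<in>{?a<..<?b}. ?f ?a \<le> ?f t"
        proof
          fix t assume t: "t \<in> {?a<..<?b}"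
          have "?f ?a < ?f t"
          proof (rule DERIV_pos_imp_increasing_open[of ?a t ?f])
            show "?a < t" using t by simp
            show "\<exists>y. DERIV ?f u :> y \<and> y > 0" if "?a < u" "u < t" for u
            proof -
              have "u \<in> {?a<..<?b}" using that t by simp
              then obtain d where "DERIV ?f u :> d" "v j < d"
                using flow j by blast
              then show ?thesis using v_pos j by (meson less_trans)
            qed
            have "continuous_on {?a..<?b} ?f" using flow j by simp
            then show "continuous_on {?a..t} ?f"
              by (rule continuous_on_subset) (use t in auto)
          qed
          then show "?f ?a \<le> ?f t" by simp
        qed
        then show "\<forall>\<^sub>F t in at_left ?b. 0 \<le> ?f t"
          using eventually_at_left_real[OF ab] a0
          by (elim eventually_mono) (meson order_trans)
      qed
    qed
  next
    case (Suc k)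
    then have IH: "\<forall>j\<in>{1..m}. 0 \<le> Sm j k" by simp
    show ?case
    proof
      fix j assume j: "j \<in> {1..m}"
      let ?f = "\<lambda>t. S j (x j t)"
      let ?a = "interval_start tau (Suc k)" let ?b = "tau (Suc k)"
      let ?C = "coalition m th D (\<lambda>i. Sm i k)"
      have "0 \<le> (\<Sum>i\<in>?C - {j}. D i j)"
      proof (rule sum_nonneg)
        fix i assume "i \<in> ?C - {j}"
        then have "i \<in> {1..m}" "i \<noteq> j" using coal_sub[of m th D "\<lambda>i. Sm i k"] by auto
        then show "0 \<le> D i j" using D_pos j by (meson less_imp_le)
      qed
      note sp = this
      have kn: "k \<le> n" using Suc.prems by simp
      have eq: "S j (x j (tau k)) = (if j \<in> ?C then 0 else Sm j k + (\<Sum>i\<in>?C - {j}. D i j))"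
        using jump kn j by blast
      have "0 \<le> S j (x j (tau k))"
      proof (cases "j \<in> ?C")
        case True then show ?thesis using eq by simp
      next
        case False
        then have "S j (x j (tau k)) = Sm j k + (\<Sum>i\<in>?C - {j}. D i j)"
          using eq by (metis (no_types) if_not_P)
        moreover have "0 \<le> Sm j k" using IH j by blast
        ultimately show ?thesis using sp by linarith
      qed
      then have a0: "0 \<le> ?f ?a" by (simp add: interval_start_def)
      show "0 \<le> Sm j (Suc k)"
      proof (rule tendsto_lowerbound)
        show "(?f \<longlongrightarrow> Sm j (Suc k)) (at_left ?b)" using leftlim j Suc.prems by simp
        show "at_left ?b \<noteq> bot" by simp
        have ab: "?a < ?b" using tau_mono Suc.prems by simp
        have "\<forall>t\<in>{?a<..<?b}. ?f ?a \<le> ?f t"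
        proof
          fix t assume t: "t \<in> {?a<..<?b}"
          have "?f ?a < ?f t"
          proof (rule DERIV_pos_imp_increasing_open[of ?a t ?f])
            show "?a < t" using t by simp
            show "\<exists>y. DERIV ?f u :> y \<and> y > 0" if "?a < u" "u < t" for u
            proof -
              have "u \<in> {?a<..<?b}" using that t by simp
              then obtain d where "DERIV ?f u :> d" "v j < d"
                using flow j Suc.prems by blast
              then show ?thesis using v_pos j by (meson less_trans)
            qed
            have "continuous_on {?a..<?b} ?f" using flow j Suc.prems by blast
            then show "continuous_on {?a..t} ?f"
              by (rule continuous_on_subset) (use t in auto)
          qed
          then show "?f ?a \<le> ?f t" by simp
        qed
        then show "\<forall>\<^sub>F t in at_left ?b. 0 \<le> ?f t"
          using eventually_at_left_real[OF ab] a0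
          by (elim eventually_mono) (meson order_trans)
      qed
    qed
  qed
  let ?s = "\<lambda>i. Sm i n"
  let ?C = "coalition m th D ?s"
  let ?E = "{D i j | i j. i \<in> {1..m} \<and> j \<in> {1..m} \<and> i \<noteq> j}"
  let ?M = "Max (th ` {1..m})"
  let ?d = "Min ?E"
  have finE: "finite ?E"
  proof -
    have "?E \<subseteq> (\<lambda>(i,j). D i j) ` ({1..m} \<times> {1..m})" by auto
    then show ?thesis by (rule finite_subset) simp
  qed
  have neE: "?E \<noteq> {}"
  proof -
    have "D 1 2 \<in> ?E" using m2 by force
    then show ?thesis by blast
  qed
  have dpos: "0 < ?d" using finE neE D_pos by (subst Min_gr_iff) auto
  have dle: "?d \<le> D i j" if "i \<in> {1..m}" "j \<in> {1..m}" "i \<noteq> j" for i j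
    using finE that by (intro Min_le) auto
  have cardC: "?M / ?d < real (card ?C)"
  proof -
    have "?M / ?d < of_int (1 + \<lfloor>?M / ?d\<rfloor>)" by linarith
    also have "\<dots> \<le> of_int (int (card ?C))" using big by linarith
    finally show ?thesis by simp
  qed
  then have cardC': "?M < real (card ?C) * ?d" using dpos by (simp add: field_simps)
  show ?thesis
  proof (rule ccontr)
    assume "?C \<noteq> {1..m}"
    then obtain j where j: "j \<in> {1..m}" "j \<notin> ?C" using coal_sub by blast
    obtain p where p: "(\<Union>k\<le>p. coal_layer m th D ?s k) = ?C" using coal_stab by blast
    have "j \<notin> coal_layer m th D ?s (Suc p)" using j by (auto simp: coalition_def)
    then have lt: "?s j + (\<Sum>i\<in>?C. D i j) < th j"
      using j unfolding layer_suc sum_layers p by auto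
    have "real (card ?C) * ?d = (\<Sum>i\<in>?C. ?d)" by simp
    also have "\<dots> \<le> (\<Sum>i\<in>?C. D i j)"
    proof (rule sum_mono)
      fix i assume "i \<in> ?C"
      then show "?d \<le> D i j" using j coal_sub[of m th D ?s] by (intro dle) auto
    qed
    finally have "?M < (\<Sum>i\<in>?C. D i j)" using cardC' by linarith
    moreover have "th j \<le> ?M" using j by (intro Max_ge) auto
    moreover have "0 \<le> ?s j" using nonneg j by simp
    ultimately show False using lt by linarith
  qed
qed

end
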